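(* Let $K$ be a field of characteristic $\neq 2$ containing a square root $i$ of $-1$, and let $A\in K\setminus\{0\}$ be a non-zero constant. Then $$\#\{S(P): P \text{ a Markoff triple for } A,\ h(P)\le H\}\sim \tfrac14 H^2\qquad (H\to\infty).$$
   Context: For $A\in K[t]$ non-zero, consider solutions $(x,y,z)\in K[t]^3$ of $x^2+y^2+z^2=Axyz$. The degree of the zero polynomial is $-\infty$. The height of a solution $P=(x,y,z)$ is $h(P)=\max\{\deg x,\deg y,\deg z\}$, and its signature is $S(P)=(\deg x,\deg y,\deg z)$. A Markoff triple is a solution $P=(x,y,z)$ with $h(P)>0$ and $\deg x\le\deg y\le\deg z$. The count is of distinct signatures. *)

theory Defs
  imports "HOL-Computational_Algebra.Polynomial" "HOL-Library.Extended_Real" "HOL-Library.Landau_Symbols"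
begin

definition pdeg :: "'a::zero poly \<Rightarrow> ereal" where
  "pdeg p = (if p = 0 then -\<infinity> else ereal (real (degree p)))"

definition is_solution :: "'a::comm_ring_1 poly \<Rightarrow> 'a poly \<times> 'a poly \<times> 'a poly \<Rightarrow> bool" where
  "is_solution A P = (case P of (x, y, z) \<Rightarrow> x^2 + y^2 + z^2 = A * x * y * z)"

definition height :: "'a::zero poly \<times> 'a poly \<times> 'a poly \<Rightarrow> ereal" where
  "height P = (case P of (x, y, z) \<Rightarrow> max (pdeg x) (max (pdeg y) (pdeg z)))"

definition signature :: "'a::zero poly \<times> 'a poly \<times> 'a poly \<Rightarrow> ereal \<times> ereal \<times> ereal" where
  "signature P = (case P of (x, y, z) \<Rightarrow> (pdeg x, pdeg y, pdeg z))"

definition markoff_triple :: "'a::comm_ring_1 poly \<Rightarrow> 'a poly \<times> 'a poly \<times> 'a poly \<Rightarrow> bool" where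
  "markoff_triple A P = (is_solution A P \<and> height P > 0 \<and>
     (case P of (x, y, z) \<Rightarrow> pdeg x \<le> pdeg y \<and> pdeg y \<le> pdeg z))"

definition markoff_sig_count :: "'a::comm_ring_1 poly \<Rightarrow> nat \<Rightarrow> nat" where
  "markoff_sig_count A H = card (signature ` {P. markoff_triple A P \<and> height P \<le> ereal (real H)})"

end

theory Submission imports Defs begin

definition SS :: "nat \<Rightarrow> (nat \<times> nat) set" where
  "SS H = {(m,n). m \<le> n \<and> m + n \<le> H}"

lemma SS_fin: "finite (SS H)"
  by (rule finite_subset[of _ "{..H} \<times> {..H}"]) (auto simp: SS_def)

lemma DD_card: "card {(m,n). m \<le> n \<and> m + n = k} = k div 2 + 1"
proof -
  have "{(m,n). m \<le> n \<and> m + n = k} = (\<lambda>m. (m, k - m)) ` {..k div 2}"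
    by (auto simp: image_iff)
  moreover have "inj_on (\<lambda>m. (m, k - m)) {..k div 2}" by (auto simp: inj_on_def)
  ultimately show ?thesis by (simp add: card_image)
qed

lemma SS_Suc: "SS (Suc H) = SS H \<union> {(m,n). m \<le> n \<and> m + n = Suc H}"
  by (auto simp: SS_def)

lemma SS_card: "H^2 \<le> 4 * card (SS H) \<and> 4 * card (SS H) \<le> H^2 + 8*H + 4"
proof (induction H)
  case 0
  have "SS 0 = {(0,0)}" by (auto simp: SS_def)
  then show ?case by simp
next
  case (Suc H)
  have d: "SS H \<inter> {(m,n). m \<le> n \<and> m + n = Suc H} = {}" by (auto simp: SS_def)
  have fin2: "finite {(m,n). m \<le> n \<and> m + n = Suc H}"
    by (rule finite_subset[of _ "{..Suc H} \<times> {..Suc H}"]) auto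
  have "card (SS (Suc H)) = card (SS H) + (Suc H div 2 + 1)"
    unfolding SS_Suc by (subst card_Un_disjoint[OF SS_fin fin2 d]) (simp add: DD_card)
  moreover have "H \<le> 2 * (Suc H div 2)" "2 * (Suc H div 2) \<le> Suc H" by auto
  moreover have "(Suc H)^2 = H^2 + 2*H + 1" by (simp add: power2_eq_square)
  ultimately have "(Suc H)^2 \<le> 4 * card (SS (Suc H))" "4 * card (SS (Suc H)) \<le> (Suc H)^2 + 8 * H + 12"
    using Suc.IH by linarith+
  then show ?case by simp
qed

lemma construct:
  fixes a i :: "'a::field"
  assumes "i * i = -1" "a \<noteq> 0"
  shows "1 \<le> m \<Longrightarrow> 1 \<le> n \<Longrightarrow> \<exists>x y z. x^2 + y^2 + z^2 = [:a:] * x * y * z \<and> x \<noteq> 0 \<and> y \<noteq> 0 \<and> z \<noteq> 0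
     \<and> degree x = m \<and> degree y = n \<and> degree z = m + n"
proof (induction "m+n" arbitrary: m n rule: less_induct)
  case less
  have i0: "i \<noteq> 0" using assms(1) by auto
  have a0: "[:a:] \<noteq> 0" using assms(2) by simp
  consider "m = n" | "m < n" | "n < m" by linarith
  then show ?case
  proof cases
    case 1
    define x :: "'a poly" where "x = monom 1 m"
    define y where "y = smult i x"
    define z where "z = [:a:] * x * y"
    have x0: "x \<noteq> 0" by (simp add: x_def)
    have y0: "y \<noteq> 0" using x0 i0 by (simp add: y_def)
    have z0: "z \<noteq> 0" using x0 y0 a0 by (simp add: z_def)
    have "x^2 + y^2 = 0" unfolding y_def
      by (simp add: power2_eq_square assms(1) mult.assoc[symmetric])
    then have "x^2 + y^2 + z^2 = [:a:] * x * y * z" by (simp add: z_def power2_eq_square)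
    moreover have "degree x = m" by (simp add: x_def degree_monom_eq)
    moreover have "degree y = n" using 1 i0 by (simp add: y_def x_def degree_monom_eq)
    moreover have "degree z = m + n" using 1 i0 x0 y0 a0 unfolding z_def
      by (simp add: degree_mult_eq y_def x_def degree_monom_eq)
    ultimately show ?thesis using x0 y0 z0 by blast
  next
    case 2
    have "\<exists>x y z. x^2 + y^2 + z^2 = [:a:] * x * y * z \<and> x \<noteq> 0 \<and> y \<noteq> 0 \<and> z \<noteq> 0
     \<and> degree x = m \<and> degree y = n - m \<and> degree z = m + (n - m)"
      using less.hyps[of m "n - m"] less.prems 2 by simp
    then obtain x y z where s: "x^2 + y^2 + z^2 = [:a:] * x * y * z" "x \<noteq> 0" "y \<noteq> 0" "z \<noteq> 0"
      "degree x = m" "degree y = n - m" "degree z = m + (n - m)" by blast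
    define y' where "y' = [:a:] * x * z - y"
    have dxz: "degree ([:a:] * x * z) = m + n" using s 2 a0 by (simp add: degree_mult_eq)
    have dy': "degree y' = m + n" unfolding y'_def diff_conv_add_uminus
      using dxz s less.prems by (subst degree_add_eq_left) auto
    have y'0: "y' \<noteq> 0" using dy' less.prems by auto
    have "x^2 + z^2 + y'^2 - [:a:] * x * z * y' = x^2 + y^2 + z^2 - [:a:] * x * y * z"
      unfolding y'_def power2_eq_square by algebra
    then have "x^2 + z^2 + y'^2 = [:a:] * x * z * y'" using s(1) by simp
    then show ?thesis using s y'0 dy' 2 by (intro exI[of _ x] exI[of _ z] exI[of _ y']) auto
  next
    case 3
    have "\<exists>x y z. x^2 + y^2 + z^2 = [:a:] * x * y * z \<and> x \<noteq> 0 \<and> y \<noteq> 0 \<and> z \<noteq> 0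
     \<and> degree x = n \<and> degree y = m - n \<and> degree z = n + (m - n)"
      using less.hyps[of n "m - n"] less.prems 3 by simp
    then obtain x y z where s: "x^2 + y^2 + z^2 = [:a:] * x * y * z" "x \<noteq> 0" "y \<noteq> 0" "z \<noteq> 0"
      "degree x = n" "degree y = m - n" "degree z = n + (m - n)" by blast
    define y' where "y' = [:a:] * x * z - y"
    have dxz: "degree ([:a:] * x * z) = m + n" using s 3 a0 by (simp add: degree_mult_eq)
    have dy': "degree y' = m + n" unfolding y'_def diff_conv_add_uminus
      using dxz s less.prems by (subst degree_add_eq_left) auto
    have y'0: "y' \<noteq> 0" using dy' less.prems by auto
    have "z^2 + x^2 + y'^2 - [:a:] * z * x * y' = x^2 + y^2 + z^2 - [:a:] * x * y * z"
      unfolding y'_def power2_eq_square by algebra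
    then have "z^2 + x^2 + y'^2 = [:a:] * z * x * y'" using s(1) by simp
    then show ?thesis using s y'0 dy' 3 by (intro exI[of _ z] exI[of _ x] exI[of _ y']) auto
  qed
qed

lemma a1: "(\<lambda>x::nat. 3*real x + 2) \<in> o(\<lambda>x. real x ^ 2 / 4)"
proof (rule smalloI_tendsto)
  have "(\<lambda>n. 12 / real n + (8 / real n) * (1 / real n)) \<longlonglongrightarrow> 0 + 0 * 0"
    by (intro tendsto_intros lim_const_over_n)
  then have l: "(\<lambda>n. 12 / real n + (8 / real n) * (1 / real n)) \<longlonglongrightarrow> 0" by simp
  show "(\<lambda>x. (3 * real x + 2) / (real x ^ 2 / 4)) \<longlonglongrightarrow> 0"
  proof (rule Lim_transform_eventually[OF l])
    show "\<forall>\<^sub>F x in sequentially. 12 / real x + 8 / real x * (1 / real x) = (3 * real x + 2) / (real x ^ 2 / 4)"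
      using eventually_gt_at_top[of "0::nat"]
      by eventually_elim (simp add: field_simps power2_eq_square)
  qed
  show "\<forall>\<^sub>F x in sequentially. real x ^ 2 / 4 \<noteq> 0"
    using eventually_gt_at_top[of "0::nat"] by eventually_elim simp
qed

lemma a2: "(\<lambda>x::nat. real x ^ 2 / 4 - (3 * real x + 2) - real x ^ 2 / 4) \<in> o(\<lambda>x. real x ^ 2 / 4)"
proof -
  have eq: "(\<lambda>x::nat. real x ^ 2 / 4 - (3 * real x + 2) - real x ^ 2 / 4) = (\<lambda>x. -(3 * real x + 2))"
    by (rule ext) simp
  show ?thesis unfolding eq landau_o.small.uminus_in_iff by (rule a1)
qed

lemma fin:
  fixes c :: "nat \<Rightarrow> real"
  assumes "\<And>H. \<bar>c H - real H ^ 2 / 4\<bar> \<le> 3 * real H + 2"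
  shows "c \<sim>[at_top] (\<lambda>H. (real H)^2 / 4)"
proof (rule asymp_equiv_sandwich_real[where l="\<lambda>H. real H ^ 2 / 4 - (3 * real H + 2)" and u="\<lambda>H. real H ^ 2 / 4 + (3 * real H + 2)"])
  show "(\<lambda>H. real H ^ 2 / 4 - (3 * real H + 2)) \<sim>[at_top] (\<lambda>H. real H ^ 2 / 4)"
    by (rule smallo_imp_asymp_equiv) (rule a2)
  show "(\<lambda>H. real H ^ 2 / 4 + (3 * real H + 2)) \<sim>[at_top] (\<lambda>H. real H ^ 2 / 4)"
    by (rule smallo_imp_asymp_equiv) (use a1 in simp)
  show "\<forall>\<^sub>F x in at_top. c x \<in> {real x ^ 2 / 4 - (3 * real x + 2)..real x ^ 2 / 4 + (3 * real x + 2)}"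
    using assms by (auto simp: abs_le_iff algebra_simps)
qed

lemma deg_rel:
  fixes x y z :: "'a::field poly"
  assumes e: "x^2+y^2+z^2 = [:a:]*x*y*z" and a: "a \<noteq> 0" and nz: "x \<noteq> 0" "y \<noteq> 0" "z \<noteq> 0"
    and o: "degree x \<le> degree y" "degree y \<le> degree z"
  shows "degree z = degree x + degree y"
proof -
  have r: "degree ([:a:]*x*y*z) = degree x + degree y + degree z"
    using a nz by (simp add: degree_mult_eq)
  have dx: "degree (x^2) = 2 * degree x" and dy: "degree (y^2) = 2 * degree y"
    and dz: "degree (z^2) = 2 * degree z" by (simp_all add: degree_power_eq nz)
  have dxy: "degree (x^2+y^2) \<le> 2 * degree y"
    using degree_add_le[of "x^2" "2 * degree y" "y^2"] dx dy o by simp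
  have "degree (x^2+y^2+z^2) \<le> 2 * degree z"
    using degree_add_le[of "x^2+y^2" "2 * degree z" "z^2"] dxy dz o by simp
  then have le: "degree x + degree y \<le> degree z" using e r by simp
  show ?thesis
  proof (cases "degree y < degree z")
    case True
    have "degree (x^2+y^2) < degree (z^2)" using dxy dz True by simp
    then have "degree (x^2+y^2+z^2) = 2 * degree z" using dz by (simp add: degree_add_eq_right)
    then show ?thesis using e r by simp
  next
    case False
    then show ?thesis using le o by simp
  qed
qed

definition FF :: "nat \<times> nat \<Rightarrow> ereal \<times> ereal \<times> ereal" where
  "FF p = (ereal (real (fst p)), ereal (real (snd p)), ereal (real (fst p + snd p)))"
definition GG :: "nat \<Rightarrow> ereal \<times> ereal \<times> ereal" where
  "GG d = (-\<infinity>, ereal (real d), ereal (real d))"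

lemma upper:
  fixes a :: "'a::field"
  assumes a: "a \<noteq> 0" and m: "markoff_triple [:a:] P" and h: "height P \<le> ereal (real H)"
  shows "signature P \<in> FF ` SS H \<union> GG ` {..H}"
proof -
  obtain x y z where P: "P = (x,y,z)" by (cases P) auto
  have e: "x^2+y^2+z^2 = [:a:]*x*y*z" using m by (simp add: markoff_triple_def is_solution_def P)
  have hp: "height P > 0" using m by (simp add: markoff_triple_def)
  have o: "pdeg x \<le> pdeg y" "pdeg y \<le> pdeg z" using m by (simp_all add: markoff_triple_def P)
  show ?thesis
  proof (cases "x = 0")
    case True
    then have e2: "z^2 = - (y^2)" using e by (simp add: eq_neg_iff_add_eq_0 add.commute)
    have y0: "y \<noteq> 0"
    proof
      assume "y = 0"
      then have "z = 0" using e2 by simp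
      then show False using hp \<open>y = 0\<close> True by (simp add: P height_def pdeg_def)
    qed
    then have z0: "z \<noteq> 0" using e2 by auto
    have "degree (z^2) = degree (y^2)" using e2 by simp
    then have dd: "degree z = degree y" using y0 z0 by (simp add: degree_power_eq)
    have "signature P = GG (degree y)" using True y0 z0 dd
      by (simp add: P signature_def GG_def pdeg_def)
    moreover have "height P = ereal (real (degree y))" using True y0 z0 dd by (simp add: P height_def pdeg_def)
    then have "degree y \<le> H" using h by (metis ereal_less_eq(3) of_nat_le_iff)
    ultimately show ?thesis by auto
  next
    case False
    have y0: "y \<noteq> 0" using o False by (auto simp: pdeg_def split: if_splits)
    have z0: "z \<noteq> 0" using o y0 False by (auto simp: pdeg_def split: if_splits)
    have od: "degree x \<le> degree y" "degree y \<le> degree z" using o False y0 z0 by (simp_all add: pdeg_def)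
    have dz: "degree z = degree x + degree y" using deg_rel[OF e a False y0 z0 od] .
    have "signature P = FF (degree x, degree y)" using False y0 z0 dz
      by (simp add: P signature_def FF_def pdeg_def)
    moreover have "height P = ereal (real (degree z))" using False y0 z0 od by (simp add: P height_def pdeg_def max_def)
    then have "degree z \<le> H" using h by (metis ereal_less_eq(3) of_nat_le_iff)
    ultimately show ?thesis using od dz by (auto simp: SS_def)
  qed
qed

lemma lower:
  fixes a i :: "'a::field"
  assumes i: "i * i = -1" and a: "a \<noteq> 0" and p: "p \<in> SS H" "1 \<le> fst p"
  shows "FF p \<in> signature ` {P. markoff_triple [:a:] P \<and> height P \<le> ereal (real H)}"
proof -
  obtain m n where pm: "p = (m,n)" by (cases p) auto
  have mn: "1 \<le> m" "m \<le> n" "m + n \<le> H" using p by (auto simp: pm SS_def)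
  obtain x y z :: "'a poly" where s: "x^2 + y^2 + z^2 = [:a:] * x * y * z" "x \<noteq> 0" "y \<noteq> 0" "z \<noteq> 0"
     "degree x = m" "degree y = n" "degree z = m + n"
    using construct[OF i a, of m n] mn by auto
  have "markoff_triple [:a:] (x,y,z)" using s mn
    by (simp add: markoff_triple_def is_solution_def height_def pdeg_def)
  moreover have "height (x,y,z) \<le> ereal (real H)" using s mn by (simp add: height_def pdeg_def)
  moreover have "signature (x,y,z) = FF p" using s by (simp add: signature_def pdeg_def FF_def pm)
  ultimately show ?thesis by (metis (mono_tags, lifting) image_eqI mem_Collect_eq)
qed

theorem theorem1p4:
  fixes a :: "'a::field"
  assumes "(2::'a) \<noteq> 0"
    and "\<exists>i::'a. i * i = -1"
    and "a \<noteq> 0"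
  shows "(\<lambda>H. real (markoff_sig_count [:a:] H)) \<sim>[at_top] (\<lambda>H. (real H)^2 / 4)"
proof (rule fin)
  fix H
  obtain i :: 'a where i: "i * i = -1" using assms(2) by blast
  define Sg where "Sg = signature ` {P. markoff_triple [:a:] P \<and> height P \<le> ereal (real H)}"
  define T where "T = {p \<in> SS H. 1 \<le> fst p}"
  have c: "markoff_sig_count [:a:] H = card Sg" by (simp add: markoff_sig_count_def Sg_def)
  have sub1: "Sg \<subseteq> FF ` SS H \<union> GG ` {..H}" unfolding Sg_def using upper[OF assms(3)] by blast
  have finU: "finite (FF ` SS H \<union> GG ` {..H})" using SS_fin by simp
  have "card Sg \<le> card (FF ` SS H \<union> GG ` {..H})" by (rule card_mono[OF finU sub1])
  also have "\<dots> \<le> card (FF ` SS H) + card (GG ` {..H})" by (rule card_Un_le)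
  also have "\<dots> \<le> card (SS H) + (H + 1)"
    using card_image_le[OF SS_fin, of FF H] card_image_le[of "{..H}" GG] by simp
  finally have up: "card Sg \<le> card (SS H) + (H + 1)" .
  have sub2: "FF ` T \<subseteq> Sg" using lower[OF i assms(3)] by (auto simp: Sg_def T_def)
  have injF: "inj_on FF T" by (auto simp: inj_on_def FF_def)
  have finT: "finite T" using SS_fin by (simp add: T_def)
  have "card T = card (FF ` T)" using card_image[OF injF] by simp
  also have "\<dots> \<le> card Sg" by (rule card_mono[OF finite_subset[OF sub1 finU] sub2])
  finally have lo1: "card T \<le> card Sg" .
  have "SS H \<subseteq> T \<union> (\<lambda>n. (0,n)) ` {..H}" by (auto simp: T_def SS_def)
  then have "card (SS H) \<le> card (T \<union> (\<lambda>n. (0::nat,n)) ` {..H})" by (rule card_mono[rotated]) (simp add: finT)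
  also have "\<dots> \<le> card T + card ((\<lambda>n. (0::nat,n)) ` {..H})" by (rule card_Un_le)
  also have "\<dots> \<le> card T + (H + 1)" using card_image_le[of "{..H}" "\<lambda>n. (0::nat,n)"] by simp
  finally have lo: "card (SS H) \<le> card Sg + (H + 1)" using lo1 by linarith
  have n1: "H^2 \<le> 4*card (SS H)" and n2: "4 * card (SS H) \<le> H^2 + 8*H + 4" using SS_card[of H] by auto
  have "real (H^2) \<le> real (4*card (SS H))" using n1 by (rule of_nat_mono)
  moreover have "real (4 * card (SS H)) \<le> real (H^2 + 8*H + 4)" using n2 by (rule of_nat_mono)
  moreover have "real (card Sg) \<le> real (card (SS H) + (H + 1))" using up by (rule of_nat_mono)
  moreover have "real (card (SS H)) \<le> real (card Sg + (H + 1))" using lo by (rule of_nat_mono)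
  ultimately have b: "real H ^ 2 \<le> 4 * real (card (SS H))" "4 * real (card (SS H)) \<le> real H ^2 + 8 * real H + 4"
    "real (card Sg) \<le> real (card (SS H)) + real H + 1" "real (card (SS H)) \<le> real (card Sg) + real H + 1"
    by (simp_all only: of_nat_add of_nat_mult of_nat_power of_nat_numeral of_nat_1 add.assoc)
  show "\<bar>real (markoff_sig_count [:a:] H) - real H ^ 2 / 4\<bar> \<le> 3 * real H + 2"
    unfolding c abs_le_iff using b by (intro conjI) linarith+
qed
end
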